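(* Let $L_5=\{-3,-2,-1,0,1\}$ with its natural linear order. Define the games $\star=\{-1\mid -3\}$, and for any game $G$: $\mathsf{M}(G)=\{1\mid G\}$, $\mathsf{P}(G)=\{G\mid -2\}$, $\mathsf{P}_\star(G)=\{G\mid \star\}$. For $n\in\mathbb{N}$ let $\mathsf{P}_n(G)=\mathsf{P}(G)$ if $n$ is odd and $\mathsf{P}_n(G)=\mathsf{P}_\star(G)$ if $n$ is even. Define $G_0=0$ (the atomic game $[0]$) and $G_{n+1}=\mathsf{M}(\mathsf{P}_n(G_n))$. Then for every $n\ge 0$, the game $G_n$ is monotone.
   Context: Games over a poset $A$ of atoms are defined inductively: for each $a\in A$, $[a]$ is a game (atomic; often written simply $a$); whenever $L,R$ are non-empty sets of games, $\{L\mid R\}$ is a game (composite), with left options the elements of $L$ and right options the elements of $R$; $\{G_1,\dots,G_n\mid H_1,\dots,H_m\}$ denotes $\{\{G_1,\dots,G_n\}\mid\{H_1,\dots,H_m\}\}$. A position of $G$ is $G$ itself, an option of $G$, an option of an option, etc. Relations $\le$ and $\lhd$ on games are defined by mutual recursion: $G\le H$ iff (1) every left option $G^L$ of $G$ satisfies $G^L\lhd H$, (2) every right option $H^R$ of $H$ satisfies $G\lhd H^R$, and (3) if $G$ or $H$ is atomic then $G\lhd H$. $G\lhd H$ iff (1) some right option $G^R$ of $G$ satisfies $G^R\le H$, or (2) some left option $H^L$ of $H$ satisfies $G\le H^L$, or (3) $G=[a]$, $H=[b]$ are atomic with $a\le b$ in $A$. A game $G$ is locally monotone if every left option satisfies $G\le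 G^L$ and every right option satisfies $G^R\le G$; it is monotone if every position of $G$ is locally monotone. *)

theory Defs
  imports "HOL-Library.FSet"
begin

text \<open>Games over a poset of atoms. Option sets are represented as finite sets
  (all games considered in the statement have finitely many options).\<close>

datatype 'a game = Atom 'a | Comp "'a game fset" "'a game fset"

fun lopts :: "'a game \<Rightarrow> 'a game fset" where
  "lopts (Atom a) = {||}"
| "lopts (Comp L R) = L"

fun ropts :: "'a game \<Rightarrow> 'a game fset" where
  "ropts (Atom a) = {||}"
| "ropts (Comp L R) = R"

fun is_atom :: "'a game \<Rightarrow> bool" where
  "is_atom (Atom a) = True"
| "is_atom (Comp L R) = False"

fun atom_le :: "'a::order game \<Rightarrow> 'a game \<Rightarrow> bool" where
  "atom_le (Atom a) (Atom b) = (a \<le> b)"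
| "atom_le _ _ = False"

function gdepth :: "'a game \<Rightarrow> nat" where
  "gdepth (Atom a) = 0"
| "gdepth (Comp L R) = Suc (Max (insert 0 (gdepth ` (fset L \<union> fset R))))"
  by pat_completeness auto
termination
proof (relation "measure size", goal_cases)
  case 1 then show ?case by simp
next
  case (2 L R x)
  have "Suc (size x) \<le> (\<Sum>y\<in>fset L \<union> fset R. Suc (size y))"
    using 2 by (intro member_le_sum) auto
  also have "\<dots> \<le> (\<Sum>y\<in>fset L. Suc (size y)) + (\<Sum>y\<in>fset R. Suc (size y))"
    by (simp add: sum_Un_nat)
  finally show ?case by simp
qed

lemma gdepth_lopt: "x |\<in>| lopts G \<Longrightarrow> gdepth x < gdepth G"
  by (cases G) (auto simp: less_Suc_eq_le intro!: Max_ge)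

lemma gdepth_ropt: "x |\<in>| ropts G \<Longrightarrow> gdepth x < gdepth G"
  by (cases G) (auto simp: less_Suc_eq_le intro!: Max_ge)

function game_le :: "'a::order game \<Rightarrow> 'a game \<Rightarrow> bool"
  and game_lf :: "'a::order game \<Rightarrow> 'a game \<Rightarrow> bool" where
  "game_le G H \<longleftrightarrow>
     (\<forall>GL \<in> fset (lopts G). game_lf GL H) \<and>
     (\<forall>HR \<in> fset (ropts H). game_lf G HR) \<and>
     ((is_atom G \<or> is_atom H) \<longrightarrow> game_lf G H)"
| "game_lf G H \<longleftrightarrow>
     (\<exists>GR \<in> fset (ropts G). game_le GR H) \<or>
     (\<exists>HL \<in> fset (lopts H). game_le G HL) \<or>
     atom_le G H"
  by pat_completeness auto
termination
  by (relation "measures [\<lambda>x. case x of Inl (G, H) \<Rightarrow> gdepth G + gdepth H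
                                     | Inr (G, H) \<Rightarrow> gdepth G + gdepth H,
                          \<lambda>x. case x of Inl _ \<Rightarrow> 1 | Inr _ \<Rightarrow> 0]")
     (use gdepth_lopt gdepth_ropt in \<open>fastforce+\<close>)

inductive_set positions :: "'a game \<Rightarrow> 'a game set" for G where
  self: "G \<in> positions G"
| lopt: "P \<in> positions G \<Longrightarrow> Q |\<in>| lopts P \<Longrightarrow> Q \<in> positions G"
| ropt: "P \<in> positions G \<Longrightarrow> Q |\<in>| ropts P \<Longrightarrow> Q \<in> positions G"

definition locally_monotone :: "'a::order game \<Rightarrow> bool" where
  "locally_monotone G \<longleftrightarrow>
     (\<forall>GL. GL |\<in>| lopts G \<longrightarrow> game_le G GL) \<and>
     (\<forall>GR. GR |\<in>| ropts G \<longrightarrow> game_le GR G)"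

definition monotone_game :: "'a::order game \<Rightarrow> bool" where
  "monotone_game G \<longleftrightarrow> (\<forall>P \<in> positions G. locally_monotone P)"

definition L5 :: "int set" where "L5 = {-3, -2, -1, 0, 1}"

definition star :: "int game" where
  "star = Comp {|Atom (-1)|} {|Atom (-3)|}"

definition gM :: "int game \<Rightarrow> int game" where
  "gM G = Comp {|Atom 1|} {|G|}"

definition gP :: "int game \<Rightarrow> int game" where
  "gP G = Comp {|G|} {|Atom (-2)|}"

definition gPstar :: "int game \<Rightarrow> int game" where
  "gPstar G = Comp {|G|} {|star|}"

definition gPn :: "nat \<Rightarrow> int game \<Rightarrow> int game" where
  "gPn n G = (if odd n then gP G else gPstar G)"

primrec Gseq :: "nat \<Rightarrow> int game" where
  "Gseq 0 = Atom 0"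
| "Gseq (Suc n) = gM (gPn n (Gseq n))"

end

theory Submission
  imports Defs
begin

declare game_le.simps[simp del] game_lf.simps[simp del]

lemma le_AA[simp]: "game_le (Atom a) (Atom b) \<longleftrightarrow> a \<le> b"
  by (subst game_le.simps) (simp add: game_lf.simps[of "Atom a" "Atom b"])
lemma le_CA[simp]: "game_le (Comp L R) (Atom b) \<longleftrightarrow>
   (\<forall>x\<in>fset L. game_lf x (Atom b)) \<and> (\<exists>x\<in>fset R. game_le x (Atom b))"
  by (subst game_le.simps) (auto simp: game_lf.simps[of "Comp L R" "Atom b"])
lemma le_AC[simp]: "game_le (Atom a) (Comp L R) \<longleftrightarrow>
   (\<forall>x\<in>fset R. game_lf (Atom a) x) \<and> (\<exists>x\<in>fset L. game_le (Atom a) x)"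
  by (subst game_le.simps) (auto simp: game_lf.simps[of "Atom a" "Comp L R"])
lemma le_CC[simp]: "game_le (Comp L R) (Comp L' R') \<longleftrightarrow>
   (\<forall>x\<in>fset L. game_lf x (Comp L' R')) \<and> (\<forall>y\<in>fset R'. game_lf (Comp L R) y)"
  by (subst game_le.simps) auto
lemma lf_AA[simp]: "game_lf (Atom a) (Atom b) \<longleftrightarrow> a \<le> b"
  by (subst game_lf.simps) simp
lemma lf_CA[simp]: "game_lf (Comp L R) (Atom b) \<longleftrightarrow> (\<exists>x\<in>fset R. game_le x (Atom b))"
  by (subst game_lf.simps) simp
lemma lf_AC[simp]: "game_lf (Atom a) (Comp L R) \<longleftrightarrow> (\<exists>x\<in>fset L. game_le (Atom a) x)"
  by (subst game_lf.simps) simp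
lemma lf_CC[simp]: "game_lf (Comp L R) (Comp L' R') \<longleftrightarrow>
   (\<exists>x\<in>fset R. game_le x (Comp L' R')) \<or> (\<exists>y\<in>fset L'. game_le (Comp L R) y)"
  by (subst game_lf.simps) simp

lemmas defs = gM_def gP_def gPstar_def gPn_def star_def

lemma G_Suc: "Gseq (Suc n) = Comp {|Atom 1|} {|gPn n (Gseq n)|}"
  by (simp add: gM_def)

declare Gseq.simps(2)[simp del]

lemma lfL: "y |\<in>| lopts H \<Longrightarrow> game_le G y \<Longrightarrow> game_lf G H"
  by (subst game_lf.simps) auto
lemma lfR: "y |\<in>| ropts G \<Longrightarrow> game_le y H \<Longrightarrow> game_lf G H"
  by (subst game_lf.simps) auto
lemma leI: "(\<And>x. x |\<in>| lopts G \<Longrightarrow> game_lf x H) \<Longrightarrow> (\<And>y. y |\<in>| ropts H \<Longrightarrow> game_lf G y)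
   \<Longrightarrow> \<not> is_atom G \<Longrightarrow> \<not> is_atom H \<Longrightarrow> game_le G H"
  by (subst game_le.simps) auto

lemma L1: "game_le (Gseq n) (Atom 1) \<and> game_le (gPn n (Gseq n)) (Atom 1)"
proof (induction n)
  case 0 then show ?case by (simp add: defs)
next
  case (Suc n)
  have a: "game_le (Gseq (Suc n)) (Atom 1)" using Suc by (simp add: G_Suc)
  moreover have "game_lf (Gseq (Suc n)) (Atom 1)"
    using Suc by (simp add: G_Suc)
  ultimately show ?case by (simp add: defs)
qed

lemma L2: "a \<le> 0 \<Longrightarrow> game_le (Atom a) (Gseq n) \<and> game_le (Atom (-2)) (gPn n (Gseq n))"
proof (induction n)
  case 0 then show ?case by (simp add: defs)
next
  case (Suc n)
  have "game_le (Atom a) (Gseq (Suc n))" using Suc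
    by (simp add: G_Suc defs split: if_splits)
  moreover have "game_le (Atom (-2)) (Gseq (Suc n))" using Suc
    by (simp add: G_Suc defs split: if_splits)
  ultimately show ?case by (simp add: defs)
qed

lemma L3: "odd n \<Longrightarrow> game_le star (gPn n (Gseq n))"
  using L2[of "-1" n] by (simp add: defs)

lemma L4: "game_le (gPn n (Gseq n)) (Gseq n)"
proof (cases n)
  case 0 then show ?thesis by (simp add: defs)
next
  case (Suc k)
  have G: "Gseq n = Comp {|Atom 1|} {|gPn k (Gseq k)|}" using Suc G_Suc by simp
  have 1: "game_le (Gseq n) (Atom 1)" using L1 by blast
  have 2: "game_le (Atom (-2)) (gPn k (Gseq k))" using L2[of 0 k] by simp
  have 3: "odd k \<Longrightarrow> game_le star (gPn k (Gseq k))" using L3 by blast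
  have GG: "game_lf (Gseq n) (Gseq n)"
    by (rule lfL[OF _ 1]) (simp add: G)
  have R: "game_lf (gPn n (Gseq n)) (gPn k (Gseq k))"
  proof (cases "odd n")
    case True
    then show ?thesis by (intro lfR[OF _ 2]) (simp add: gPn_def gP_def)
  next
    case False
    then have "odd k" using Suc by simp
    with False show ?thesis by (intro lfR[OF _ 3]) (simp_all add: gPn_def gPstar_def)
  qed
  have lo: "lopts (gPn n (Gseq n)) = {|Gseq n|}" by (simp add: gPn_def gP_def gPstar_def)
  have ro: "ropts (Gseq n) = {|gPn k (Gseq k)|}" by (simp add: G)
  have na: "\<not> is_atom (gPn n (Gseq n))" "\<not> is_atom (Gseq n)"
    by (simp_all add: G gPn_def gP_def gPstar_def)
  show ?thesis
    by (rule leI) (use GG R na in \<open>simp_all only: lo ro fsingleton_iff not_False_eq_True\<close>)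
qed

lemma L5: "locally_monotone (gPn n (Gseq n))"
proof -
  have "game_le (Atom (-1)) (Gseq n)" using L2[of "-1" n] by simp
  moreover have "game_le (Atom (-2)) (gPn n (Gseq n))" using L2[of 0 n] by simp
  moreover note L4[of n]
  ultimately show ?thesis
    by (simp add: locally_monotone_def gPn_def gP_def gPstar_def star_def
        split: if_splits)
qed

lemma L6: "locally_monotone (Gseq (Suc n))"
proof -
  have 1: "game_le (Gseq (Suc n)) (Atom 1)" using L1 by blast
  have 2: "game_le (Gseq n) (Atom 1)" using L1 by blast
  have HH: "game_lf (gPn n (Gseq n)) (gPn n (Gseq n))"
    by (rule lfL[OF _ L4]) (simp add: gPn_def gP_def gPstar_def)
  have a: "game_le (gPn n (Gseq n)) (Gseq (Suc n))"
    apply (rule leI)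
    using HH lfL[OF _ 2, of "Gseq (Suc n)"]
    by (auto simp: G_Suc gPn_def gP_def gPstar_def)
  show ?thesis using 1 a by (simp add: locally_monotone_def G_Suc)
qed

lemma pos_Atom: "P \<in> positions (Atom a) \<Longrightarrow> P = Atom a"
  by (induction rule: positions.induct) auto

lemma pos_Comp: "P \<in> positions (Comp L R) \<Longrightarrow>
   P = Comp L R \<or> (\<exists>x\<in>fset L \<union> fset R. P \<in> positions x)"
proof (induction rule: positions.induct)
  case self then show ?case by simp
next
  case (lopt P Q)
  from lopt.IH show ?case
  proof
    assume "P = Comp L R" then show ?thesis using lopt.hyps(2) positions.self[of Q] by auto
  next
    assume "\<exists>x\<in>fset L \<union> fset R. P \<in> positions x"
    then show ?thesis using lopt.hyps(2) positions.lopt by blast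
  qed
next
  case (ropt P Q)
  from ropt.IH show ?case
  proof
    assume "P = Comp L R" then show ?thesis using ropt.hyps(2) positions.self[of Q] by auto
  next
    assume "\<exists>x\<in>fset L \<union> fset R. P \<in> positions x"
    then show ?thesis using ropt.hyps(2) positions.ropt by blast
  qed
qed

lemma mono_Atom: "monotone_game (Atom a)"
  unfolding monotone_game_def
proof
  fix P assume "P \<in> positions (Atom a)"
  then have "P = Atom a" by (rule pos_Atom)
  then show "locally_monotone P" by (simp add: locally_monotone_def)
qed

lemma mono_Comp: "locally_monotone (Comp L R) \<Longrightarrow> (\<forall>x\<in>fset L \<union> fset R. monotone_game x)
   \<Longrightarrow> monotone_game (Comp L R)"
  unfolding monotone_game_def
proof
  fix P assume h: "\<forall>x\<in>fset L \<union> fset R. \<forall>P\<in>positions x. locally_monotone P"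
    "locally_monotone (Comp L R)" and p: "P \<in> positions (Comp L R)"
  from p have "P = Comp L R \<or> (\<exists>x\<in>fset L \<union> fset R. P \<in> positions x)" by (rule pos_Comp)
  then show "locally_monotone P" using h by blast
qed

lemma mono_star: "monotone_game star"
  unfolding star_def
  by (rule mono_Comp) (auto simp: locally_monotone_def mono_Atom)

lemma mono_Gseq: "monotone_game (Gseq n)"
proof (induction n)
  case 0 then show ?case by (simp add: mono_Atom)
next
  case (Suc n)
  have "monotone_game (gPn n (Gseq n))"
  proof (cases "odd n")
    case True
    have "monotone_game (Comp {|Gseq n|} {|Atom (-2)|})"
      apply (rule mono_Comp)
      using L5[of n] True apply (simp add: gPn_def gP_def)
      using Suc.IH mono_Atom[of "-2"] by simp
    then show ?thesis using True by (simp add: gPn_def gP_def)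
  next
    case False
    have "monotone_game (Comp {|Gseq n|} {|star|})"
      apply (rule mono_Comp)
      using L5[of n] False apply (simp add: gPn_def gPstar_def)
      using Suc.IH mono_star by simp
    then show ?thesis using False by (simp add: gPn_def gPstar_def)
  qed
  then show ?case
    apply (subst G_Suc)
    apply (rule mono_Comp)
    using L6[of n] apply (simp only: G_Suc)
    using mono_Atom[of 1] by simp
qed

theorem lemma3p1:
  shows "\<forall>n::nat. monotone_game (Gseq n)"
  using mono_Gseq by blast

end
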